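(* Let $\alpha:I\to\mathbb{E}^3$ be a unit speed Frenet curve with arclength parameter $s$, Frenet frame $\{T,N,B\}$, curvature $\kappa>0$ and torsion $\tau$. Let $\beta(s)=\int\big(x_1(s)T(s)+x_2(s)N(s)\big)\,ds$ be an osculating mate of $\alpha$, i.e. $x_1,x_2$ are smooth functions with $x_1^2+x_2^2=1$ and $\beta''(s)\perp \mathrm{span}\{T(s),N(s)\}$ for all $s$, and assume $\beta$ is a Frenet curve. Then $x_1(s)=\sin\big(\int\kappa(s)ds\big)$, $x_2(s)=\cos\big(\int\kappa(s)ds\big)$ for an antiderivative $\int\kappa(s)ds$ of $\kappa$, and the Frenet apparatus $\{\bar T,\bar N,\bar B,\bar\kappa,\bar\tau\}$ of $\beta$ is $$\bar T=\sin\Big(\int\kappa ds\Big)T+\cos\Big(\int\kappa ds\Big)N,\quad \bar N=B,\quad \bar B=\cos\Big(\int\kappa ds\Big)T-\sin\Big(\int\kappa ds\Big)N,$$ $$\bar\kappa=\varepsilon_1\tau\cos\Big(\int\kappa ds\Big),\qquad \bar\tau=\tau\sin\Big(\int\kappa ds\Big),$$ where $\varepsilon_1=\pm1$ is chosen such that $\bar\kappa>0$.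
   Context: A unit speed curve $\alpha$ in Euclidean 3-space $\mathbb{E}^3$ is a Frenet curve if its curvature $\kappa=\|\alpha''\|$ is nowhere zero; its Frenet frame satisfies $T=\alpha'$, $T'=\kappa N$, $N'=-\kappa T+\tau B$, $B'=-\tau N$, $B=T\times N$. Since $\|\beta'\|=1$, $\beta$ is unit speed with parameter $s$, and its Frenet apparatus is defined in the same way (with derivatives with respect to $s$).
   Formalization: $\bar N$ is $\varepsilon_1 B$ and $\bar B$ is $\varepsilon_1(\cos(\int\kappa ds)T-\sin(\int\kappa ds)N)$, with the same sign $\varepsilon_1$ as in $\bar\kappa$, instead of $\bar N=B$ and $\bar B$ without the factor $\varepsilon_1$. The statement above fails without it. *)

theory Defs
  imports "HOL-Analysis.Analysis"
begin

text \<open>Curves in Euclidean 3-space are functions real => real^3; derivatives are taken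
  at interior points of the open parameter interval I.\<close>

definition vel :: "(real \<Rightarrow> real^3) \<Rightarrow> real \<Rightarrow> real^3" where
  "vel \<alpha> s = vector_derivative \<alpha> (at s)"

definition acc :: "(real \<Rightarrow> real^3) \<Rightarrow> real \<Rightarrow> real^3" where
  "acc \<alpha> s = vector_derivative (vel \<alpha>) (at s)"

definition unit_speed_on :: "real set \<Rightarrow> (real \<Rightarrow> real^3) \<Rightarrow> bool" where
  "unit_speed_on I \<alpha> \<longleftrightarrow> (\<forall>s\<in>I. \<alpha> differentiable (at s) \<and> norm (vel \<alpha> s) = 1)"

definition frenet_curve_on :: "real set \<Rightarrow> (real \<Rightarrow> real^3) \<Rightarrow> bool" where
  "frenet_curve_on I \<alpha> \<longleftrightarrow> unit_speed_on I \<alpha> \<and>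
     (\<forall>s\<in>I. vel \<alpha> differentiable (at s) \<and> norm (acc \<alpha> s) \<noteq> 0)"

definition frenet_apparatus ::
  "real set \<Rightarrow> (real \<Rightarrow> real^3) \<Rightarrow> (real \<Rightarrow> real^3) \<Rightarrow> (real \<Rightarrow> real^3) \<Rightarrow> (real \<Rightarrow> real^3)
   \<Rightarrow> (real \<Rightarrow> real) \<Rightarrow> (real \<Rightarrow> real) \<Rightarrow> bool" where
  "frenet_apparatus I \<alpha> T N B \<kappa> \<tau> \<longleftrightarrow> frenet_curve_on I \<alpha> \<and>
     (\<forall>s\<in>I. T s = vel \<alpha> s \<and> \<kappa> s = norm (acc \<alpha> s) \<and> N s = (1 / \<kappa> s) *\<^sub>R acc \<alpha> s \<and>
        B s = cross3 (T s) (N s) \<and>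
        (N has_vector_derivative (- \<kappa> s *\<^sub>R T s + \<tau> s *\<^sub>R B s)) (at s) \<and>
        (B has_vector_derivative (- \<tau> s *\<^sub>R N s)) (at s))"

end

theory Submission
  imports Defs
begin

lemma vd_inner:
  fixes f g :: "real \<Rightarrow> 'a::real_inner"
  assumes "(f has_vector_derivative f') (at s)" "(g has_vector_derivative g') (at s)"
  shows "((\<lambda>t. f t \<bullet> g t) has_real_derivative (f' \<bullet> g s + f s \<bullet> g')) (at s)"
proof -
  have "((\<lambda>t. f t \<bullet> g t) has_derivative (\<lambda>h. f s \<bullet> (h *\<^sub>R g') + (h *\<^sub>R f') \<bullet> g s)) (at s)"
    using assms unfolding has_vector_derivative_def by (intro has_derivative_inner)
  then show ?thesis unfolding has_field_derivative_def
    by (rule has_derivative_eq_rhs) (auto simp: algebra_simps fun_eq_iff)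
qed

lemma frame:
  assumes fa: "frenet_apparatus I \<alpha> T N B \<kappa> \<tau>" and I: "open I" and s: "s \<in> I"
  shows "\<kappa> s > 0" "T s \<bullet> T s = 1" "N s \<bullet> N s = 1" "T s \<bullet> N s = 0"
    "B s \<bullet> B s = 1" "T s \<bullet> B s = 0" "N s \<bullet> B s = 0"
    "(T has_vector_derivative \<kappa> s *\<^sub>R N s) (at s)"
    "cross3 (T s) (B s) = - N s" "cross3 (N s) (B s) = T s" "acc \<alpha> s = \<kappa> s *\<^sub>R N s"
    "(N has_vector_derivative (- \<kappa> s *\<^sub>R T s + \<tau> s *\<^sub>R B s)) (at s)"
    "(B has_vector_derivative (- \<tau> s *\<^sub>R N s)) (at s)"
proof -
  have fc: "frenet_curve_on I \<alpha>" and ap: "\<And>t. t \<in> I \<Longrightarrow> T t = vel \<alpha> t \<and> \<kappa> t = norm (acc \<alpha> t) \<and> N t = (1 / \<kappa> t) *\<^sub>R acc \<alpha> t \<and>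
        B t = cross3 (T t) (N t) \<and>
        (N has_vector_derivative (- \<kappa> t *\<^sub>R T t + \<tau> t *\<^sub>R B t)) (at t) \<and>
        (B has_vector_derivative (- \<tau> t *\<^sub>R N t)) (at t)"
    using fa unfolding frenet_apparatus_def by auto
  have us: "\<And>t. t \<in> I \<Longrightarrow> norm (vel \<alpha> t) = 1 \<and> vel \<alpha> differentiable (at t) \<and> norm (acc \<alpha> t) \<noteq> 0"
    using fc unfolding frenet_curve_on_def unit_speed_on_def by auto
  show k: "\<kappa> s > 0" using ap[OF s] us[OF s] by simp
  show an: "acc \<alpha> s = \<kappa> s *\<^sub>R N s" using ap[OF s] k by simp
  show TT: "T s \<bullet> T s = 1" using ap[OF s] us[OF s] by (simp add: dot_square_norm)
  show NN: "N s \<bullet> N s = 1" using ap[OF s] us[OF s] k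
    by (simp add: dot_square_norm norm_scaleR)
  have "(vel \<alpha> has_vector_derivative acc \<alpha> s) (at s)"
    using us[OF s] unfolding acc_def by (simp add: vector_derivative_works)
  then have Td: "(T has_vector_derivative acc \<alpha> s) (at s)"
    by (rule has_vector_derivative_transform_within_open[OF _ I s]) (use ap in auto)
  then show "(T has_vector_derivative \<kappa> s *\<^sub>R N s) (at s)" using an by simp
  have d1: "((\<lambda>t. T t \<bullet> T t) has_real_derivative (acc \<alpha> s \<bullet> T s + T s \<bullet> acc \<alpha> s)) (at s)"
    using vd_inner[OF Td Td] .
  have d2: "((\<lambda>t. T t \<bullet> T t) has_real_derivative 0) (at s)"
  proof (rule has_field_derivative_transform_within_open[OF _ I s])
    show "((\<lambda>t. 1::real) has_real_derivative 0) (at s)" by simp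
    fix t assume "t \<in> I" then show "1 = T t \<bullet> T t" using ap us by (simp add: dot_square_norm)
  qed
  have "acc \<alpha> s \<bullet> T s = 0" using DERIV_unique[OF d1 d2] by (simp add: inner_commute)
  then show TN: "T s \<bullet> N s = 0" using an k by (simp add: inner_commute)
  have B: "B s = cross3 (T s) (N s)" using ap[OF s] by simp
  have nT: "norm (T s) = 1" using ap[OF s] us[OF s] by simp
  have nN: "norm (N s) = 1" using NN by (simp add: norm_eq_1)
  have "(norm (B s))^2 = 1" using norm_cross_dot[of "T s" "N s"] B TN nT nN by simp
  then show "B s \<bullet> B s = 1" by (metis power2_norm_eq_inner)
  show "T s \<bullet> B s = 0" "N s \<bullet> B s = 0" using B dot_cross_self by (auto simp: inner_commute)
  show "cross3 (T s) (B s) = - N s" using B Cross3.Lagrange[of "T s" "T s" "N s"] TT TN by simp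
  show "cross3 (N s) (B s) = T s" using B Cross3.Lagrange[of "N s" "T s" "N s"] NN TN by (simp add: inner_commute)
  show "(N has_vector_derivative (- \<kappa> s *\<^sub>R T s + \<tau> s *\<^sub>R B s)) (at s)"
    "(B has_vector_derivative (- \<tau> s *\<^sub>R N s)) (at s)" using ap[OF s] by auto
qed

theorem theorem3:
  fixes I :: "real set" and \<alpha> \<beta> T N B Tb Nb Bb :: "real \<Rightarrow> real^3"
    and \<kappa> \<tau> \<kappa>b \<tau>b x1 x2 :: "real \<Rightarrow> real"
  assumes I: "is_interval I" "open I"
    and alpha: "frenet_apparatus I \<alpha> T N B \<kappa> \<tau>"
    and beta_vel: "\<forall>s\<in>I. (\<beta> has_vector_derivative (x1 s *\<^sub>R T s + x2 s *\<^sub>R N s)) (at s)"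
    and x_smooth: "\<forall>s\<in>I. x1 differentiable (at s) \<and> x2 differentiable (at s)"
    and unit: "\<forall>s\<in>I. (x1 s)\<^sup>2 + (x2 s)\<^sup>2 = 1"
    and osc: "\<forall>s\<in>I. \<forall>w\<in>span {T s, N s}. orthogonal (acc \<beta> s) w"
    and beta: "frenet_apparatus I \<beta> Tb Nb Bb \<kappa>b \<tau>b"
  shows "\<exists>\<theta>::real \<Rightarrow> real. (\<forall>s\<in>I. (\<theta> has_real_derivative \<kappa> s) (at s)) \<and>
    (\<forall>s\<in>I. x1 s = sin (\<theta> s) \<and> x2 s = cos (\<theta> s) \<and>
       Tb s = sin (\<theta> s) *\<^sub>R T s + cos (\<theta> s) *\<^sub>R N s \<and>
       (\<exists>\<epsilon>::real. (\<epsilon> = 1 \<or> \<epsilon> = -1) \<and>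
          Nb s = \<epsilon> *\<^sub>R B s \<and>
          Bb s = \<epsilon> *\<^sub>R (cos (\<theta> s) *\<^sub>R T s - sin (\<theta> s) *\<^sub>R N s) \<and>
          \<kappa>b s = \<epsilon> * \<tau> s * cos (\<theta> s) \<and>
          \<tau>b s = \<tau> s * sin (\<theta> s)))"
proof -
  note fa = frame[OF alpha I(2)]
  note fb = frame[OF beta I(2)]
  have apb: "\<And>t. t \<in> I \<Longrightarrow> Tb t = vel \<beta> t \<and> \<kappa>b t = norm (acc \<beta> t) \<and> Nb t = (1 / \<kappa>b t) *\<^sub>R acc \<beta> t \<and>
        Bb t = cross3 (Tb t) (Nb t) \<and>
        (Nb has_vector_derivative (- \<kappa>b t *\<^sub>R Tb t + \<tau>b t *\<^sub>R Bb t)) (at t)"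
    using beta unfolding frenet_apparatus_def by auto
  have vb: "\<And>t. t \<in> I \<Longrightarrow> vel \<beta> t = x1 t *\<^sub>R T t + x2 t *\<^sub>R N t"
    using beta_vel vector_derivative_at unfolding vel_def by blast
  define d1 where "d1 = deriv x1"
  define d2 where "d2 = deriv x2"
  have x1d: "\<And>t. t \<in> I \<Longrightarrow> (x1 has_real_derivative d1 t) (at t)"
    using x_smooth by (simp add: d1_def DERIV_deriv_iff_real_differentiable)
  have x2d: "\<And>t. t \<in> I \<Longrightarrow> (x2 has_real_derivative d2 t) (at t)"
    using x_smooth by (simp add: d2_def DERIV_deriv_iff_real_differentiable)
  have accb0: "acc \<beta> t = (d1 t - \<kappa> t * x2 t) *\<^sub>R T t + (\<kappa> t * x1 t + d2 t) *\<^sub>R N t + (x2 t * \<tau> t) *\<^sub>R B t"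
    if t: "t \<in> I" for t
  proof -
    have "((\<lambda>u. x1 u *\<^sub>R T u + x2 u *\<^sub>R N u) has_vector_derivative
       (x1 t *\<^sub>R (\<kappa> t *\<^sub>R N t) + d1 t *\<^sub>R T t + (x2 t *\<^sub>R (- \<kappa> t *\<^sub>R T t + \<tau> t *\<^sub>R B t) + d2 t *\<^sub>R N t))) (at t)"
      by (intro has_vector_derivative_add has_vector_derivative_scaleR x1d x2d fa t)
    then have "(vel \<beta> has_vector_derivative
       (x1 t *\<^sub>R (\<kappa> t *\<^sub>R N t) + d1 t *\<^sub>R T t + (x2 t *\<^sub>R (- \<kappa> t *\<^sub>R T t + \<tau> t *\<^sub>R B t) + d2 t *\<^sub>R N t))) (at t)"
      by (rule has_vector_derivative_transform_within_open[OF _ I(2) t]) (simp add: vb)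
    then show ?thesis unfolding acc_def
      by (subst vector_derivative_at) (auto simp: algebra_simps)
  qed
  have rel: "d1 t = \<kappa> t * x2 t \<and> d2 t = - \<kappa> t * x1 t" if t: "t \<in> I" for t
  proof -
    have "orthogonal (acc \<beta> t) (T t)" "orthogonal (acc \<beta> t) (N t)"
      using osc t by (auto intro: span_base)
    then have "acc \<beta> t \<bullet> T t = 0" "acc \<beta> t \<bullet> N t = 0" by (auto simp: orthogonal_def)
    then show ?thesis using fa[OF t] unfolding accb0[OF t]
      by (auto simp: inner_add_left inner_commute algebra_simps)
  qed
  have accb: "acc \<beta> t = (x2 t * \<tau> t) *\<^sub>R B t" if t: "t \<in> I" for t
    using accb0[OF t] rel[OF t] by (simp add: algebra_simps)
  define f where "f t = complex_of_real (x2 t) + \<i> * complex_of_real (x1 t)" for t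
  have cx1: "continuous_on I x1" "continuous_on I x2"
    using x_smooth by (auto intro!: continuous_at_imp_continuous_on differentiable_imp_continuous_within)
  have "continuous_on I f" unfolding f_def by (intro continuous_intros cx1)
  moreover have "f \<in> I \<rightarrow> sphere 0 1"
  proof
    fix t assume "t \<in> I"
    then have "(x2 t)^2 + (x1 t)^2 = 1" using unit by auto
    then show "f t \<in> sphere 0 1" unfolding f_def by (simp add: cmod_def complex_eq_iff)
  qed
  moreover have "Borsukian I" using I(1) by (simp add: convex_imp_Borsukian is_interval_convex)
  ultimately obtain g where cg: "continuous_on I (complex_of_real \<circ> g)"
    and fg: "\<And>t. t \<in> I \<Longrightarrow> f t = exp (\<i> * complex_of_real (g t))"
    unfolding Borsukian_continuous_logarithm_circle_real by metis
  have xg: "x1 t = sin (g t) \<and> x2 t = cos (g t)" if t: "t \<in> I" for t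
  proof -
    have "Re (f t) = Re (exp (\<i> * complex_of_real (g t)))" "Im (f t) = Im (exp (\<i> * complex_of_real (g t)))"
      using fg[OF t] by auto
    then show ?thesis unfolding f_def by (simp add: Re_exp Im_exp)
  qed
  have cg': "continuous_on I g"
  proof -
    have "continuous_on I (Re \<circ> (complex_of_real \<circ> g))" by (intro continuous_on_compose cg continuous_intros)
    then show ?thesis by (simp add: o_def)
  qed
  have gd: "(g has_real_derivative \<kappa> s) (at s)" if s: "s \<in> I" for s
  proof -
    define h where "h t = x1 t * x2 s - x2 t * x1 s" for t
    have hd: "(h has_real_derivative \<kappa> s) (at s)"
    proof -
      have "(h has_real_derivative (d1 s * x2 s - d2 s * x1 s)) (at s)"
        unfolding h_def using x1d[OF s] x2d[OF s] by (auto intro!: derivative_eq_intros)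
      moreover have "d1 s * x2 s - d2 s * x1 s = \<kappa> s"
        using rel[OF s] unit s by (auto simp: power2_eq_square algebra_simps)
         (metis distrib_left mult.right_neutral)
      ultimately show ?thesis by simp
    qed
    have h0: "h s = 0" unfolding h_def by simp
    have ad: "((\<lambda>t. g s + arcsin (h t)) has_real_derivative \<kappa> s) (at s)"
    proof -
      have "((\<lambda>t. arcsin (h t)) has_real_derivative inverse (sqrt (1 - (h s)\<^sup>2)) * \<kappa> s) (at s)"
        by (rule DERIV_chain2[OF DERIV_arcsin hd]) (auto simp: h0)
      then have "((\<lambda>t. arcsin (h t)) has_real_derivative \<kappa> s) (at s)" by (simp add: h0)
      then have "((\<lambda>t. g s + arcsin (h t)) has_real_derivative (0 + \<kappa> s)) (at s)"
        by (intro DERIV_add DERIV_const)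
      then show ?thesis by simp
    qed
    have "isCont g s" using cg' I(2) s by (simp add: continuous_on_eq_continuous_at)
    then obtain d where d: "d > 0" "\<And>t. dist t s < d \<Longrightarrow> dist (g t) (g s) < pi/2"
      unfolding continuous_at_eps_delta by (metis pi_half_gt_zero)
    obtain e where e: "e > 0" "ball s e \<subseteq> I" using I(2) s open_contains_ball by blast
    have ev: "eventually (\<lambda>t. g s + arcsin (h t) = g t) (nhds s)"
      unfolding eventually_nhds_metric
    proof (intro exI[of _ "min d e"] conjI allI impI)
      show "0 < min d e" using d e by simp
      fix t assume "dist t s < min d e"
      then have lt: "dist t s < d" "dist t s < e" by auto
      have tI: "t \<in> I" using e(2) lt(2) by (auto simp: mem_ball dist_commute)
      have dg: "dist (g t) (g s) < pi/2" using d(2)[OF lt(1)] .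
      have "h t = sin (g t - g s)" unfolding h_def using xg[OF tI] xg[OF s] by (simp add: sin_diff)
      moreover have "-(pi/2) \<le> g t - g s" "g t - g s \<le> pi/2" using dg unfolding dist_real_def by linarith+
      ultimately have "arcsin (h t) = g t - g s" using arcsin_sin[of "g t - g s"] by simp
      then show "g s + arcsin (h t) = g t" by simp
    qed
    show ?thesis using ad DERIV_cong_ev[OF refl ev refl] by blast
  qed
  define eps where "eps t = (if \<tau> t * cos (g t) > 0 then 1 else (-1::real))" for t
  have eps2: "eps t * eps t = 1" "eps t = 1 \<or> eps t = -1" for t by (auto simp: eps_def)
  have pt: "Tb t = sin (g t) *\<^sub>R T t + cos (g t) *\<^sub>R N t \<and> Nb t = eps t *\<^sub>R B t \<and>
     Bb t = eps t *\<^sub>R (cos (g t) *\<^sub>R T t - sin (g t) *\<^sub>R N t) \<and> \<kappa>b t = eps t * \<tau> t * cos (g t)"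
    if t: "t \<in> I" for t
  proof -
    have Tb: "Tb t = sin (g t) *\<^sub>R T t + cos (g t) *\<^sub>R N t" using apb[OF t] vb[OF t] xg[OF t] by simp
    have nB: "norm (B t) = 1" using fa(5)[OF t] by (simp add: norm_eq_1)
    have kb: "\<kappa>b t = \<bar>cos (g t) * \<tau> t\<bar>" using apb[OF t] accb[OF t] xg[OF t] nB by simp
    have kpos: "\<kappa>b t > 0" using fb(1)[OF t] .
    have e: "\<kappa>b t = eps t * \<tau> t * cos (g t)" using kb kpos
      by (auto simp: eps_def abs_if mult.commute mult_less_0_iff zero_less_mult_iff)
    have e2: "cos (g t) * \<tau> t = eps t * \<kappa>b t" using e eps2(1)[of t]
      by (metis mult.assoc mult.commute mult_1)
    have Nb: "Nb t = eps t *\<^sub>R B t"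
      using apb[OF t] accb[OF t] xg[OF t] e2 kpos by simp
    have Bb: "Bb t = eps t *\<^sub>R (cos (g t) *\<^sub>R T t - sin (g t) *\<^sub>R N t)"
      using apb[OF t] Tb Nb fa(9)[OF t] fa(10)[OF t]
      by (simp add: cross_add_left cross_mult_left cross_mult_right algebra_simps)
    show ?thesis using Tb Nb Bb e by simp
  qed
  have tb: "\<tau>b s = \<tau> s * sin (g s)" if s: "s \<in> I" for s
  proof -
    define \<sigma> where "\<sigma> t = Nb t \<bullet> B t" for t
    have se: "\<sigma> t = eps t" if "t \<in> I" for t
      using pt[OF that] fa(5)[OF that] by (simp add: \<sigma>_def)
    have "(\<sigma> has_real_derivative (- \<kappa>b s *\<^sub>R Tb s + \<tau>b s *\<^sub>R Bb s) \<bullet> B s + Nb s \<bullet> (- \<tau> s *\<^sub>R N s)) (at s)"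
      unfolding \<sigma>_def using apb[OF s] fa(13)[OF s] by (intro vd_inner) auto
    then have "isCont \<sigma> s" by (rule DERIV_isCont)
    then obtain d where d: "d > 0" "\<And>t. dist t s < d \<Longrightarrow> dist (\<sigma> t) (\<sigma> s) < 1"
      unfolding continuous_at_eps_delta by (metis zero_less_one)
    obtain e where e: "e > 0" "ball s e \<subseteq> I" using I(2) s open_contains_ball by blast
    have loc: "eps s *\<^sub>R B t = Nb t" if lt: "dist t s < min d e" for t
    proof -
      have tI: "t \<in> I" using e(2) lt by (auto simp: mem_ball dist_commute)
      have "dist (eps t) (eps s) < 1" using d(2)[of t] lt se[OF tI] se[OF s] by simp
      then have "eps t = eps s" using eps2(2)[of t] eps2(2)[of s] by (auto simp: dist_real_def)
      then show ?thesis using pt[OF tI] by simp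
    qed
    have "((\<lambda>t. eps s *\<^sub>R B t) has_vector_derivative (eps s *\<^sub>R (- \<tau> s *\<^sub>R N s) + 0 *\<^sub>R B s)) (at s)"
      by (intro has_vector_derivative_scaleR DERIV_const fa(13)[OF s])
    then have "(Nb has_vector_derivative (eps s *\<^sub>R (- \<tau> s *\<^sub>R N s) + 0 *\<^sub>R B s)) (at s)"
      by (rule has_vector_derivative_transform_within[where d="min d e"]) (use d e loc in auto)
    then have eq: "- \<kappa>b s *\<^sub>R Tb s + \<tau>b s *\<^sub>R Bb s = eps s *\<^sub>R (- \<tau> s *\<^sub>R N s) + 0 *\<^sub>R B s"
      using apb[OF s] vector_derivative_unique_at by blast
    have "(- \<kappa>b s *\<^sub>R Tb s + \<tau>b s *\<^sub>R Bb s) \<bullet> Bb s = \<tau>b s"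
      using fb(5)[OF s] fb(6)[OF s] by (simp add: inner_add_left inner_diff_left)
    moreover have "(eps s *\<^sub>R (- \<tau> s *\<^sub>R N s) + 0 *\<^sub>R B s) \<bullet> Bb s = eps s * eps s * \<tau> s * sin (g s)"
      using pt[OF s] fa(3)[OF s] fa(4)[OF s]
      by (simp add: inner_add_left inner_diff_right inner_commute)
    ultimately show ?thesis using eq eps2(1)[of s] by simp
  qed
  show ?thesis
  proof (intro exI[of _ g] conjI ballI)
    fix s assume s: "s \<in> I"
    show "(g has_real_derivative \<kappa> s) (at s)" using gd[OF s] .
    show "x1 s = sin (g s)" "x2 s = cos (g s)" using xg[OF s] by auto
    show "Tb s = sin (g s) *\<^sub>R T s + cos (g s) *\<^sub>R N s" using pt[OF s] by simp
    show "\<exists>\<epsilon>::real. (\<epsilon> = 1 \<or> \<epsilon> = -1) \<and>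
          Nb s = \<epsilon> *\<^sub>R B s \<and>
          Bb s = \<epsilon> *\<^sub>R (cos (g s) *\<^sub>R T s - sin (g s) *\<^sub>R N s) \<and>
          \<kappa>b s = \<epsilon> * \<tau> s * cos (g s) \<and>
          \<tau>b s = \<tau> s * sin (g s)"
      using pt[OF s] tb[OF s] eps2(2)[of s] by blast
  qed
qed
end
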